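(* Let $\langle B,\wedge,{}'\rangle$ be an algebra with $\wedge$ binary and ${}'$ unary satisfying $x\wedge(y\wedge z)\approx (y\wedge x)\wedge z$ and $x\approx (x'\wedge y)'\wedge(x'\wedge y')'$. Then $x\wedge[y\wedge(z\wedge u)]=y\wedge[x\wedge(z\wedge u)]$ for all $x,y,z,u\in B$. *)

theory Defs
  imports Main
begin

end

theory Submission
  imports Defs
begin

theorem lemma6p13:
  fixes m :: "'a \<Rightarrow> 'a \<Rightarrow> 'a" and c :: "'a \<Rightarrow> 'a"
  assumes A: "\<And>x y z. m x (m y z) = m (m y x) z"
    and R: "\<And>x y. x = m (c (m (c x) y)) (c (m (c x) (c y)))"
  shows "\<forall>x y z u. m x (m y (m z u)) = m y (m x (m z u))"
proof -
  have R': "\<And>x y. m (c (m (c x) y)) (c (m (c x) (c y))) = x" using R by metis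
  have s5: "\<And>x y z. m (c (m (c x) (c y))) (m (c (m (c x) y)) z) = m x z"
    by (metis A R')
  have s6: "\<And>x y. m (c (m (c x) (c y))) x = m x (c (m (c x) (c y)))"
    by (metis s5 R')
  have s7: "\<And>x y z u. m x (m y (m z u)) = m x (m z (m y u))"
    by (metis A)
  have s8: "\<And>x y. m (c x) (m (c x) y) = m y (m (c x) (c x))"
    by (metis s6 R' A)
  have s9: "\<And>x y z. m x (m y (m (c z) (c z))) = m (c z) (m y (m (c z) x))"
    by (metis s7 s8 A)
  have s10: "\<And>x y z. m (c x) (m y (m (c x) z)) = m z (m (c x) (m y (c x)))"
    by (metis s7 s9)
  have s11: "\<And>x y z. m (c (m (c x) y)) (m z x) = m x (m z (c (m (c x) y)))"
    by (metis s5 s10 R')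
  have s12: "\<And>x y z. m (c x) (m (c (m (c (m (c x) y)) (m (c x) (c y)))) z) = m y (m (c x) z)"
    by (metis s5 R' A)
  have s13: "\<And>x y. m (c x) (c (m (c (m (c x) y)) (c (c (m (c x) (c y)))))) = m (c x) y"
    by (metis R')
  have s14: "\<And>x y z u. m (c (m x (m (c y) z))) (m u y) = m y (m u (c (m x (m (c y) z))))"
    by (metis s11 s12)
  have s15: "\<And>x y z. m (c (m (c x) y)) (m (c (m (c x) (m (c (m (c x) y)) (c (c (m (c x) (c y))))))) z) = m x z"
    by (metis s5 s13)
  have s16: "\<And>x y. m (c (m (c x) (m (c (m (c x) y)) (c (c (m (c x) (c y))))))) (c (m (c x) y)) = x"
    by (metis R' s13)
  have s18: "\<And>x y. m x y = m y x"
    by (metis s14 s15 s16)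
  have s20: "\<And>x y z. m x (m y z) = m y (m x z)"
    by (metis A s18)
  show ?thesis using s20 by blast
qed

end
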